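(* Assume (H1'). Then for any $T>0$, any $q\in\mathbb R^d$ and any $A>0$ there exists $R>0$ such that \[\lim_{\delta\to0}\limsup_{n\to\infty}\sup_{z\in E:|nq-z|<\delta n}\frac1n\log\mathbb P_z\bigl(\tau_{nR}\le Tn\bigr)\ \le\ -A.\]
   Context: Let $E\subset\mathbb R^d$ be unbounded and $(Z(t))_{t\ge0}$ a continuous-time strong Markov process on $E$ with right-continuous paths having left limits; $\mathbb P_z$ denotes probability given $Z(0)=z$; $Z^\varepsilon(t)=\varepsilon Z(t/\varepsilon)$. For $R>0$, $\tau_R=\inf\{t\ge0:|Z(t)|\ge R\}$. (H1'): for every $T>0$ the family $(Z^\varepsilon(t),t\in[0,T])$ satisfies a sample path large deviation principle in the Skorohod space $D([0,T],\mathbb R^d)$ with a good rate function $I_{[0,T]}$ (good: for every $c\ge0$ and compact $V$, $\{\phi:\phi(0)\in V,I_{[0,T]}(\phi)\le c\}$ is compact), with lower bound $\lim_{\delta\to0}\liminf_{\varepsilon\to0}\inf_{z'\in E:|\varepsilon z'-z|<\delta}\varepsilon\log\mathbb P_{z'}(Z^\varepsilon(\cdot)\in\mathcal O)\ge-\inf_{\phi\in\mathcal O,\phi(0)=z}I_{[0,T]}(\phi)$ for open $\mathcal O$, and upper bound $\lim_{\delta\to0}\limsup_{\varepsilon\to0}\sup_{z'\in E:|\varepsilon z'-z|<\delta}\varepsilon\log\mathbb P_{z'}(Z^\varepsilon(\cdot)\in F)\le-\inf_{\phi\in F,\phi(0)=z}I_{[0,T]}(\phi)$ for closed $F$; and $I_T(q,q')=\inf\{I_{[0,T]}(\phi):\phi(0)=q,\phi(T)=q'\}$.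 *)

theory Defs
  imports "HOL-Probability.Probability"
begin

(* Paths on [0,T] are normalised by clamping the time argument to [0,T]. *)
definition clamp :: "real \<Rightarrow> (real \<Rightarrow> 'a) \<Rightarrow> real \<Rightarrow> 'a" where
  "clamp T \<phi> = (\<lambda>t. \<phi> (max 0 (min T t)))"

definition cadlag_on :: "real \<Rightarrow> (real \<Rightarrow> 'a::real_normed_vector) \<Rightarrow> bool" where
  "cadlag_on T \<phi> \<longleftrightarrow>
     (\<forall>t\<in>{0..<T}. continuous (at_right t) \<phi>) \<and>
     (\<forall>t\<in>{0<..T}. \<exists>l. (\<phi> \<longlongrightarrow> l) (at_left t))"

definition Dsp :: "real \<Rightarrow> (real \<Rightarrow> 'a::real_normed_vector) set" where
  "Dsp T = {\<phi>. clamp T \<phi> = \<phi> \<and> cadlag_on T \<phi>}"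

definition time_changes :: "real \<Rightarrow> (real \<Rightarrow> real) set" where
  "time_changes T = {r. strict_mono_on {0..T} r \<and> continuous_on {0..T} r \<and> r 0 = 0 \<and> r T = T}"

definition sk_dist :: "real \<Rightarrow> (real \<Rightarrow> 'a::real_normed_vector) \<Rightarrow> (real \<Rightarrow> 'a) \<Rightarrow> real" where
  "sk_dist T \<phi> \<psi> = Inf ((\<lambda>r. max (Sup ((\<lambda>t. \<bar>r t - t\<bar>) ` {0..T}))
                                    (Sup ((\<lambda>t. norm (\<phi> t - \<psi> (r t))) ` {0..T})))
                          ` time_changes T)"

definition sk_open :: "real \<Rightarrow> (real \<Rightarrow> 'a::real_normed_vector) set \<Rightarrow> bool" where
  "sk_open T U \<longleftrightarrow> U \<subseteq> Dsp T \<and>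
     (\<forall>\<phi>\<in>U. \<exists>e>0. \<forall>\<psi>\<in>Dsp T. sk_dist T \<phi> \<psi> < e \<longrightarrow> \<psi> \<in> U)"

lemma istopology_sk_open: "istopology (sk_open T)"
  unfolding istopology_def
proof (intro conjI allI impI)
  fix S1 S2 :: "(real \<Rightarrow> 'a::real_normed_vector) set"
  assume h1: "sk_open T S1" and h2: "sk_open T S2"
  note h = conjI[OF h1 h2]
  show "sk_open T (S1 \<inter> S2)"
    unfolding sk_open_def
  proof (intro conjI ballI)
    show "S1 \<inter> S2 \<subseteq> Dsp T" using h by (auto simp: sk_open_def)
  next
    fix \<phi> assume "\<phi> \<in> S1 \<inter> S2"
    then obtain e1 e2 where "e1 > 0" "e2 > 0"
      "\<forall>\<psi>\<in>Dsp T. sk_dist T \<phi> \<psi> < e1 \<longrightarrow> \<psi> \<in> S1"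
      "\<forall>\<psi>\<in>Dsp T. sk_dist T \<phi> \<psi> < e2 \<longrightarrow> \<psi> \<in> S2"
      using h unfolding sk_open_def by blast
    then show "\<exists>e>0. \<forall>\<psi>\<in>Dsp T. sk_dist T \<phi> \<psi> < e \<longrightarrow> \<psi> \<in> S1 \<inter> S2"
      by (intro exI[of _ "min e1 e2"]) auto
  qed
next
  fix K :: "(real \<Rightarrow> 'a::real_normed_vector) set set"
  assume "\<forall>S\<in>K. sk_open T S"
  then show "sk_open T (\<Union>K)"
    unfolding sk_open_def by (metis UnionE UnionI Union_least)
qed

definition skorohod_topology :: "real \<Rightarrow> (real \<Rightarrow> 'a::real_normed_vector) topology" where
  "skorohod_topology T = topology (sk_open T)"

definition borel_of_top :: "'a topology \<Rightarrow> 'a measure" where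
  "borel_of_top X = sigma (topspace X) {U. openin X U}"

definition elog :: "real \<Rightarrow> ereal" where
  "elog p = (if p \<le> 0 then -\<infinity> else ereal (ln p))"

definition rescaled_path ::
  "(real \<Rightarrow> 'w \<Rightarrow> 'a::real_normed_vector) \<Rightarrow> real \<Rightarrow> real \<Rightarrow> 'w \<Rightarrow> real \<Rightarrow> 'a" where
  "rescaled_path Z \<epsilon> T \<omega> = clamp T (\<lambda>t. \<epsilon> *\<^sub>R Z (t / \<epsilon>) \<omega>)"

definition exit_time :: "(real \<Rightarrow> 'w \<Rightarrow> 'a::real_normed_vector) \<Rightarrow> real \<Rightarrow> 'w \<Rightarrow> ereal" where
  "exit_time Z R \<omega> = Inf {ereal t | t. t \<ge> 0 \<and> norm (Z t \<omega>) \<ge> R}"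

definition good_rate_function :: "real \<Rightarrow> ((real \<Rightarrow> 'a::real_normed_vector) \<Rightarrow> ereal) \<Rightarrow> bool" where
  "good_rate_function T I \<longleftrightarrow>
     (\<forall>\<phi>\<in>Dsp T. I \<phi> \<ge> 0) \<and>
     (\<forall>c::real. closedin (skorohod_topology T) {\<phi>\<in>Dsp T. I \<phi> \<le> ereal c}) \<and>
     (\<forall>c::real. \<forall>V. c \<ge> 0 \<longrightarrow> compact V \<longrightarrow>
        compactin (skorohod_topology T) {\<phi>\<in>Dsp T. \<phi> 0 \<in> V \<and> I \<phi> \<le> ereal c})"

(* hypothesis (H1'): uniform sample path LDP for Z^\<epsilon> on every [0,T] *)
definition H1' ::
  "'a::real_normed_vector set \<Rightarrow> ('a \<Rightarrow> 'w measure) \<Rightarrow> (real \<Rightarrow> 'w \<Rightarrow> 'a)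
    \<Rightarrow> (real \<Rightarrow> (real \<Rightarrow> 'a) \<Rightarrow> ereal) \<Rightarrow> bool" where
  "H1' E P Z I \<longleftrightarrow> (\<forall>T>0.
     good_rate_function T (I T) \<and>
     (\<forall>U z. openin (skorohod_topology T) U \<longrightarrow>
        Lim (at_right (0::real)) (\<lambda>\<delta>. Liminf (at_right (0::real)) (\<lambda>\<epsilon>.
          INF z'\<in>{z'\<in>E. norm (\<epsilon> *\<^sub>R z' - z) < \<delta>}.
            ereal \<epsilon> * elog (measure (P z') {\<omega>\<in>space (P z'). rescaled_path Z \<epsilon> T \<omega> \<in> U})))
        \<ge> - (INF \<phi>\<in>{\<phi>\<in>U. \<phi> 0 = z}. I T \<phi>)) \<and>
     (\<forall>F z. closedin (skorohod_topology T) F \<longrightarrow>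
        Lim (at_right (0::real)) (\<lambda>\<delta>. Limsup (at_right (0::real)) (\<lambda>\<epsilon>.
          SUP z'\<in>{z'\<in>E. norm (\<epsilon> *\<^sub>R z' - z) < \<delta>}.
            ereal \<epsilon> * elog (measure (P z') {\<omega>\<in>space (P z'). rescaled_path Z \<epsilon> T \<omega> \<in> F})))
        \<le> - (INF \<phi>\<in>{\<phi>\<in>F. \<phi> 0 = z}. I T \<phi>)))"

definition cadlag_process_on ::
  "'a::real_normed_vector set \<Rightarrow> ('a \<Rightarrow> 'w measure) \<Rightarrow> (real \<Rightarrow> 'w \<Rightarrow> 'a) \<Rightarrow> bool" where
  "cadlag_process_on E P Z \<longleftrightarrow> (\<forall>z\<in>E.
     prob_space (P z) \<and>
     (\<forall>t. Z t \<in> borel_measurable (P z)) \<and>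
     (AE \<omega> in P z. Z 0 \<omega> = z) \<and>
     (\<forall>\<omega>\<in>space (P z). (\<forall>t\<ge>0. Z t \<omega> \<in> E) \<and>
        (\<forall>t\<ge>0. continuous (at_right t) (\<lambda>s. Z s \<omega>)) \<and>
        (\<forall>t>0. \<exists>l. ((\<lambda>s. Z s \<omega>) \<longlongrightarrow> l) (at_left t))) \<and>
     (\<forall>T>0. \<forall>\<epsilon>>0. (\<lambda>\<omega>. rescaled_path Z \<epsilon> T \<omega>)
        \<in> measurable (P z) (borel_of_top (skorohod_topology T))))"

end

theory Submission
  imports Defs "HOL-Real_Asymp.Real_Asymp"
begin

lemma Limsup_mono_filter: "F \<le> G \<Longrightarrow> Limsup F f \<le> Limsup G (f::_\<Rightarrow>'b::complete_lattice)"
  unfolding Limsup_def by (rule INF_superset_mono) (auto simp: le_filter_def)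

lemma limsup_seq_le_Limsup_at_right:
  fixes G :: "real \<Rightarrow> ereal"
  shows "limsup (\<lambda>n::nat. G (1 / real n)) \<le> Limsup (at_right 0) G"
proof -
  have fl: "filterlim (\<lambda>n::nat. 1 / real n) (at_right 0) sequentially"
    by real_asymp
  have "limsup (\<lambda>n::nat. G (1 / real n)) \<le> Limsup (filtermap (\<lambda>n::nat. 1 / real n) sequentially) G"
    by (rule Limsup_filtermap_ge)
  also have "\<dots> \<le> Limsup (at_right 0) G"
    using fl unfolding filterlim_def by (rule Limsup_mono_filter)
  finally show ?thesis .
qed

lemma mono_tendsto_at_right0:
  fixes f :: "real \<Rightarrow> ereal"
  assumes "\<And>a b. 0 < a \<Longrightarrow> a \<le> b \<Longrightarrow> f a \<le> f b"
  shows "(f \<longlongrightarrow> (INF d\<in>{0<..}. f d)) (at_right 0)"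
proof (rule order_tendstoI)
  fix y assume "y < (INF d\<in>{0<..}. f d)"
  then show "eventually (\<lambda>x. y < f x) (at_right 0)"
  proof -
    assume y: "y < (INF d\<in>{0<..}. f d)"
    have "\<forall>x>0. x < 1 \<longrightarrow> y < f x"
    proof (intro allI impI)
      fix x :: real assume "x > 0"
      then have "(INF d\<in>{0<..}. f d) \<le> f x" by (intro INF_lower) simp
      then show "y < f x" using y by (rule less_le_trans[rotated])
    qed
    then show ?thesis unfolding eventually_at_right_field by (intro exI[of _ 1]) simp
  qed
next
  fix y assume "(INF d\<in>{0<..}. f d) < y"
  then obtain d where d: "d > 0" "f d < y" by (auto simp: INF_less_iff)
  have "\<forall>x>0. x < d \<longrightarrow> f x < y"
    using assms d by (meson le_less le_less_trans)
  then show "eventually (\<lambda>x. f x < y) (at_right 0)"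
    unfolding eventually_at_right_field using d(1) by blast
qed

lemma cadlag_local_bound:
  fixes \<phi> :: "real \<Rightarrow> 'a::real_normed_vector"
  assumes c: "cadlag_on T \<phi>" and t: "t \<in> {0..T}"
  shows "\<exists>\<eta>>0. \<exists>B. \<forall>s\<in>{0..T}. dist s t < \<eta> \<longrightarrow> norm (\<phi> s) \<le> B"
proof -
  have R: "\<exists>br>t. \<exists>Br. \<forall>s\<in>{0..T}. t \<le> s \<and> s < br \<longrightarrow> norm (\<phi> s) \<le> Br"
  proof (cases "t < T")
    case True
    then have "continuous (at_right t) \<phi>" using c t unfolding cadlag_on_def by auto
    then have "(\<phi> \<longlongrightarrow> \<phi> t) (at_right t)"
      by (simp add: continuous_within)
    then have "eventually (\<lambda>s. dist (\<phi> s) (\<phi> t) < 1) (at_right t)"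
      by (rule tendstoD) simp
    then obtain b where b: "b > t" "\<And>s. s > t \<Longrightarrow> s < b \<Longrightarrow> dist (\<phi> s) (\<phi> t) < 1"
      unfolding eventually_at_right_field by blast
    have "\<forall>s\<in>{0..T}. t \<le> s \<and> s < b \<longrightarrow> norm (\<phi> s) \<le> norm (\<phi> t) + 1"
    proof (intro ballI impI)
      fix s assume "s \<in> {0..T}" "t \<le> s \<and> s < b"
      then consider "s = t" | "s > t" "s < b" by linarith
      then show "norm (\<phi> s) \<le> norm (\<phi> t) + 1"
      proof cases
        case 2
        then have "dist (\<phi> s) (\<phi> t) < 1" by (rule b(2))
        then show ?thesis using norm_triangle_ineq2[of "\<phi> s" "\<phi> t"] by (simp add: dist_norm)
      qed simp
    qed
    then show ?thesis using b(1) by blast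
  next
    case False
    then have "\<forall>s\<in>{0..T}. t \<le> s \<and> s < t + 1 \<longrightarrow> norm (\<phi> s) \<le> norm (\<phi> t)"
      using t by auto
    then show ?thesis by (intro exI[of _ "t+1"]) auto
  qed
  have L: "\<exists>bl<t. \<exists>Bl. \<forall>s\<in>{0..T}. bl < s \<and> s \<le> t \<longrightarrow> norm (\<phi> s) \<le> Bl"
  proof (cases "t > 0")
    case True
    then have "t \<in> {0<..T}" using t by auto
    then obtain l where "(\<phi> \<longlongrightarrow> l) (at_left t)" using c unfolding cadlag_on_def by blast
    then have "eventually (\<lambda>s. dist (\<phi> s) l < 1) (at_left t)"
      by (rule tendstoD) simp
    then obtain b where b: "b < t" "\<And>s. s > b \<Longrightarrow> s < t \<Longrightarrow> dist (\<phi> s) l < 1"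
      unfolding eventually_at_left_field by blast
    have "\<forall>s\<in>{0..T}. b < s \<and> s \<le> t \<longrightarrow> norm (\<phi> s) \<le> norm (\<phi> t) + norm l + 1"
    proof (intro ballI impI)
      fix s assume "s \<in> {0..T}" "b < s \<and> s \<le> t"
      then consider "s = t" | "s > b" "s < t" by linarith
      then show "norm (\<phi> s) \<le> norm (\<phi> t) + norm l + 1"
      proof cases
        case 2
        then have "dist (\<phi> s) l < 1" by (rule b(2))
        then have "norm (\<phi> s) \<le> norm l + 1"
          using norm_triangle_ineq2[of "\<phi> s" l] by (simp add: dist_norm)
        then show ?thesis using norm_ge_zero[of "\<phi> t"] by linarith
      qed simp
    qed
    then show ?thesis using b(1) by blast
  next
    case False
    then have "\<forall>s\<in>{0..T}. t - 1 < s \<and> s \<le> t \<longrightarrow> norm (\<phi> s) \<le> norm (\<phi> t)"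
      using t by auto
    then show ?thesis by (intro exI[of _ "t - 1"]) auto
  qed
  from R L obtain br Br bl Bl where
    r: "br > t" "\<forall>s\<in>{0..T}. t \<le> s \<and> s < br \<longrightarrow> norm (\<phi> s) \<le> Br" and
    l: "bl < t" "\<forall>s\<in>{0..T}. bl < s \<and> s \<le> t \<longrightarrow> norm (\<phi> s) \<le> Bl"
    by blast
  have "\<forall>s\<in>{0..T}. dist s t < min (br - t) (t - bl) \<longrightarrow> norm (\<phi> s) \<le> max Br Bl"
  proof (intro ballI impI)
    fix s assume s: "s \<in> {0..T}" "dist s t < min (br - t) (t - bl)"
    show "norm (\<phi> s) \<le> max Br Bl"
    proof (cases "t \<le> s")
      case True
      then have "s < br" using s(2) by (auto simp: dist_real_def)
      then show ?thesis using r(2) s(1) True by force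
    next
      case False
      then have "bl < s" using s(2) by (auto simp: dist_real_def)
      then show ?thesis using l(2) s(1) False by force
    qed
  qed
  then show ?thesis using r(1) l(1) by (intro exI[of _ "min (br - t) (t - bl)"]) auto
qed

lemma cadlag_bounded:
  fixes \<phi> :: "real \<Rightarrow> 'a::real_normed_vector"
  assumes c: "cadlag_on T \<phi>"
  shows "\<exists>B. \<forall>t\<in>{0..T}. norm (\<phi> t) \<le> B"
proof -
  have "\<forall>t\<in>{0..T}. \<exists>\<eta>. \<eta> > 0 \<and> (\<exists>B. \<forall>s\<in>{0..T}. dist s t < \<eta> \<longrightarrow> norm (\<phi> s) \<le> B)"
    using cadlag_local_bound[OF c] by blast
  then obtain \<eta> where e1: "\<And>t. t \<in> {0..T} \<Longrightarrow> \<eta> t > 0 \<and> (\<exists>B. \<forall>s\<in>{0..T}. dist s t < \<eta> t \<longrightarrow> norm (\<phi> s) \<le> B)"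
    by (metis (no_types))
  then have "\<forall>t\<in>{0..T}. \<exists>B. \<forall>s\<in>{0..T}. dist s t < \<eta> t \<longrightarrow> norm (\<phi> s) \<le> B" by blast
  then obtain B where e2: "\<And>t. t \<in> {0..T} \<Longrightarrow> \<forall>s\<in>{0..T}. dist s t < \<eta> t \<longrightarrow> norm (\<phi> s) \<le> B t"
    by (metis (no_types))
  have eb: "\<And>t. t \<in> {0..T} \<Longrightarrow> \<eta> t > 0"
     "\<And>t s. t \<in> {0..T} \<Longrightarrow> s \<in> {0..T} \<Longrightarrow> dist s t < \<eta> t \<Longrightarrow> norm (\<phi> s) \<le> B t"
    using e1 e2 by auto
  have "compact {0..T}" by simp
  then obtain D where D: "D \<subseteq> {0..T}" "finite D" "{0..T} \<subseteq> (\<Union>c\<in>D. ball c (\<eta> c))"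
  proof (rule compactE_image)
    show "{0..T} \<subseteq> (\<Union>c\<in>{0..T}. ball c (\<eta> c))"
      using eb(1) by force
  qed auto
  have "\<forall>t\<in>{0..T}. norm (\<phi> t) \<le> (\<Sum>c\<in>D. \<bar>B c\<bar>)"
  proof
    fix t assume t: "t \<in> {0..T}"
    then obtain c where c: "c \<in> D" "t \<in> ball c (\<eta> c)" using D(3) by blast
    then have "norm (\<phi> t) \<le> B c" using eb(2)[of c t] D(1) t by (auto simp: dist_commute)
    also have "\<dots> \<le> \<bar>B c\<bar>" by simp
    also have "\<dots> \<le> (\<Sum>c\<in>D. \<bar>B c\<bar>)"
      using c(1) D(2) by (intro member_le_sum) auto
    finally show "norm (\<phi> t) \<le> (\<Sum>c\<in>D. \<bar>B c\<bar>)" .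
  qed
  then show ?thesis by blast
qed

lemma openin_skorohod: "openin (skorohod_topology T) U \<longleftrightarrow> sk_open T U"
  unfolding skorohod_topology_def by (simp add: istopology_sk_open)

lemma topspace_skorohod: "topspace (skorohod_topology T) = Dsp T"
proof -
  have "sk_open T (Dsp T)" unfolding sk_open_def by (auto intro: exI[of _ 1])
  moreover have "\<And>U. sk_open T U \<Longrightarrow> U \<subseteq> Dsp T" unfolding sk_open_def by blast
  ultimately show ?thesis unfolding topspace_def openin_skorohod
    by (intro equalityI) (blast, blast)
qed

lemma time_change_range:
  assumes "r \<in> time_changes T" "t \<in> {0..T}"
  shows "r t \<in> {0..T}"
proof -
  have sm: "strict_mono_on {0..T} r" "r 0 = 0" "r T = T" using assms(1) unfolding time_changes_def by auto
  have "r 0 \<le> r t" using assms(2) by (intro strict_mono_on_leD[OF sm(1)]) auto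
  moreover have "r t \<le> r T" using assms(2) by (intro strict_mono_on_leD[OF sm(1)]) auto
  ultimately show ?thesis using sm by auto
qed

lemma time_change_onto:
  assumes "r \<in> time_changes T" "u \<in> {0..T}"
  shows "\<exists>t\<in>{0..T}. r t = u"
proof -
  have c: "continuous_on {0..T} r" "r 0 = 0" "r T = T" using assms(1) unfolding time_changes_def by auto
  from IVT'[of r 0 u T, OF _ _ _ c(1)] c(2,3) assms(2) show ?thesis by auto
qed

lemma id_time_change: "id \<in> time_changes T"
  unfolding time_changes_def by (auto simp: strict_mono_on_def)

definition bset :: "real \<Rightarrow> real \<Rightarrow> (real \<Rightarrow> 'a::real_normed_vector) set" where
  "bset T M = {\<phi>\<in>Dsp T. \<exists>m<M. \<forall>t\<in>{0..T}. norm (\<phi> t) \<le> m}"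

lemma Dsp_bounded: "\<phi> \<in> Dsp T \<Longrightarrow> \<exists>B. \<forall>t\<in>{0..T}. norm (\<phi> t) \<le> B"
  unfolding Dsp_def using cadlag_bounded by blast

lemma sk_open_bset: "sk_open T (bset T M :: (real \<Rightarrow> 'a::real_normed_vector) set)"
  unfolding sk_open_def
proof (intro conjI ballI)
  show "(bset T M :: (real \<Rightarrow> 'a) set) \<subseteq> Dsp T" unfolding bset_def by auto
next
  fix \<phi> :: "real \<Rightarrow> 'a" assume "\<phi> \<in> bset T M"
  then obtain m where \<phi>: "\<phi> \<in> Dsp T" "m < M" "\<forall>t\<in>{0..T}. norm (\<phi> t) \<le> m"
    unfolding bset_def by blast
  show "\<exists>e>0. \<forall>\<psi>\<in>Dsp T. sk_dist T \<phi> \<psi> < e \<longrightarrow> \<psi> \<in> bset T M"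
  proof (intro exI[of _ "M - m"] conjI ballI impI)
    show "M - m > 0" using \<phi>(2) by simp
  next
    fix \<psi> :: "real \<Rightarrow> 'a" assume \<psi>: "\<psi> \<in> Dsp T" "sk_dist T \<phi> \<psi> < M - m"
    obtain B where B: "\<forall>t\<in>{0..T}. norm (\<psi> t) \<le> B" using Dsp_bounded[OF \<psi>(1)] by blast
    let ?S = "(\<lambda>r. max (Sup ((\<lambda>t. \<bar>r t - t\<bar>) ` {0..T}))
                                    (Sup ((\<lambda>t. norm (\<phi> t - \<psi> (r t))) ` {0..T}))) ` time_changes T"
    have "?S \<noteq> {}" using id_time_change by blast
    have "Inf ?S < M - m" using \<psi>(2) unfolding sk_dist_def .
    with cInf_lessD[OF \<open>?S \<noteq> {}\<close>] obtain x where x: "x \<in> ?S" "x < M - m" by blast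
    from x(1) obtain r where r: "r \<in> time_changes T"
      "x = max (Sup ((\<lambda>t. \<bar>r t - t\<bar>) ` {0..T})) (Sup ((\<lambda>t. norm (\<phi> t - \<psi> (r t))) ` {0..T}))"
      by (rule imageE)
    have r2: "Sup ((\<lambda>t. norm (\<phi> t - \<psi> (r t))) ` {0..T}) < M - m"
      using x(2) unfolding r(2) by (rule max.strict_boundedE)
    define s0 where "s0 = Sup ((\<lambda>t. norm (\<phi> t - \<psi> (r t))) ` {0..T})"
    have bdd: "bdd_above ((\<lambda>t. norm (\<phi> t - \<psi> (r t))) ` {0..T})"
    proof (rule bdd_aboveI2)
      fix t :: real assume t: "t \<in> {0..T}"
      have "norm (\<phi> t - \<psi> (r t)) \<le> norm (\<phi> t) + norm (\<psi> (r t))" by (rule norm_triangle_ineq4)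
      also have "\<dots> \<le> m + B" using \<phi>(3) B t time_change_range[OF r(1) t] by (intro add_mono) auto
      finally show "norm (\<phi> t - \<psi> (r t)) \<le> m + B" .
    qed
    have "\<forall>u\<in>{0..T}. norm (\<psi> u) \<le> m + s0"
    proof
      fix u assume "u \<in> {0..T}"
      then obtain t where t: "t \<in> {0..T}" "r t = u" using time_change_onto[OF r(1)] by blast
      have "norm (\<phi> t - \<psi> (r t)) \<le> s0" unfolding s0_def using bdd t(1) by (intro cSup_upper) auto
      moreover have "norm (\<psi> (r t)) \<le> norm (\<phi> t) + norm (\<phi> t - \<psi> (r t))"
        using norm_triangle_ineq2[of "\<psi> (r t)" "\<phi> t"] by (simp add: norm_minus_commute)
      ultimately show "norm (\<psi> u) \<le> m + s0" using \<phi>(3) t by force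
    qed
    moreover have "m + s0 < M" using r2 unfolding s0_def by simp
    ultimately show "\<psi> \<in> bset T M" unfolding bset_def using \<psi>(1) by blast
  qed
qed

lemma exit_attained:
  fixes Z :: "real \<Rightarrow> 'w \<Rightarrow> 'a::real_normed_vector"
  assumes rc: "\<forall>t\<ge>0. continuous (at_right t) (\<lambda>s. Z s \<omega>)"
    and ex: "exit_time Z R' \<omega> \<le> ereal X"
  shows "\<exists>t0. 0 \<le> t0 \<and> t0 \<le> X \<and> norm (Z t0 \<omega>) \<ge> R'"
proof -
  define S where "S = {ereal t | t. t \<ge> 0 \<and> norm (Z t \<omega>) \<ge> R'}"
  have ex': "Inf S \<le> ereal X" using ex unfolding exit_time_def S_def .
  have ge0: "0 \<le> Inf S" unfolding S_def by (rule Inf_greatest) auto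
  obtain \<tau> where tau: "Inf S = ereal \<tau>" using ex' ge0 by (cases "Inf S") auto
  have tau0: "0 \<le> \<tau>" "\<tau> \<le> X" using ex' ge0 tau by auto
  have "norm (Z \<tau> \<omega>) \<ge> R'"
  proof (rule ccontr)
    assume "\<not> R' \<le> norm (Z \<tau> \<omega>)"
    then have lt: "norm (Z \<tau> \<omega>) < R'" by simp
    have "((\<lambda>s. Z s \<omega>) \<longlongrightarrow> Z \<tau> \<omega>) (at_right \<tau>)"
      using rc tau0 by (simp add: continuous_within)
    then have "eventually (\<lambda>s. dist (Z s \<omega>) (Z \<tau> \<omega>) < R' - norm (Z \<tau> \<omega>)) (at_right \<tau>)"
      by (rule tendstoD) (use lt in simp)
    then obtain b where b: "b > \<tau>" "\<And>s. s > \<tau> \<Longrightarrow> s < b \<Longrightarrow> dist (Z s \<omega>) (Z \<tau> \<omega>) < R' - norm (Z \<tau> \<omega>)"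
      unfolding eventually_at_right_field by blast
    have "ereal b \<le> Inf S"
    proof (rule Inf_greatest)
      fix e assume "e \<in> S"
      then obtain t where t: "e = ereal t" "t \<ge> 0" "norm (Z t \<omega>) \<ge> R'" unfolding S_def by blast
      have "Inf S \<le> e" using \<open>e \<in> S\<close> by (rule Inf_lower)
      then have "\<tau> \<le> t" using tau t(1) by simp
      have "\<not> (\<tau> < t \<and> t < b)"
      proof
        assume "\<tau> < t \<and> t < b"
        then have "dist (Z t \<omega>) (Z \<tau> \<omega>) < R' - norm (Z \<tau> \<omega>)" using b(2) by blast
        then have "norm (Z t \<omega>) < R'"
          using norm_triangle_ineq2[of "Z t \<omega>" "Z \<tau> \<omega>"] by (simp add: dist_norm)
        then show False using t(3) by simp
      qed
      moreover have "t \<noteq> \<tau>" using t(3) lt by auto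
      ultimately show "ereal b \<le> e" using \<open>\<tau> \<le> t\<close> t(1) by auto
    qed
    then show False using tau b(1) by simp
  qed
  then show ?thesis using tau0 by blast
qed

lemma elog_mono: "p \<le> p' \<Longrightarrow> elog p \<le> elog p'"
  unfolding elog_def by auto

theorem mainTheorem10:
  fixes E :: "(real^'d) set"
    and P :: "real^'d \<Rightarrow> 'w measure"
    and Z :: "real \<Rightarrow> 'w \<Rightarrow> real^'d"
    and I :: "real \<Rightarrow> (real \<Rightarrow> real^'d) \<Rightarrow> ereal"
    and T A :: real and q :: "real^'d"
  assumes "\<not> bounded E"
    and "cadlag_process_on E P Z"
    and "H1' E P Z I"
    and "T > 0" and "A > 0"
  shows "\<exists>R>0. Lim (at_right (0::real)) (\<lambda>\<delta>. limsup (\<lambda>n::nat.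
            SUP z\<in>{z\<in>E. norm (real n *\<^sub>R q - z) < \<delta> * real n}.
              ereal (1 / real n) *
              elog (measure (P z) {\<omega>\<in>space (P z). exit_time Z (real n * R) \<omega> \<le> ereal (T * real n)})))
         \<le> ereal (- A)"
proof -
  have H: "good_rate_function T (I T) \<and>
     (\<forall>U z. openin (skorohod_topology T) U \<longrightarrow>
        Lim (at_right (0::real)) (\<lambda>\<delta>. Liminf (at_right (0::real)) (\<lambda>\<epsilon>.
          INF z'\<in>{z'\<in>E. norm (\<epsilon> *\<^sub>R z' - z) < \<delta>}.
            ereal \<epsilon> * elog (measure (P z') {\<omega>\<in>space (P z'). rescaled_path Z \<epsilon> T \<omega> \<in> U})))
        \<ge> - (INF \<phi>\<in>{\<phi>\<in>U. \<phi> 0 = z}. I T \<phi>)) \<and>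
     (\<forall>F z. closedin (skorohod_topology T) F \<longrightarrow>
        Lim (at_right (0::real)) (\<lambda>\<delta>. Limsup (at_right (0::real)) (\<lambda>\<epsilon>.
          SUP z'\<in>{z'\<in>E. norm (\<epsilon> *\<^sub>R z' - z) < \<delta>}.
            ereal \<epsilon> * elog (measure (P z') {\<omega>\<in>space (P z'). rescaled_path Z \<epsilon> T \<omega> \<in> F})))
        \<le> - (INF \<phi>\<in>{\<phi>\<in>F. \<phi> 0 = z}. I T \<phi>))"
    using assms(3,4) unfolding H1'_def by blast
  define K where "K = {\<phi>\<in>Dsp T. \<phi> 0 \<in> {q} \<and> I T \<phi> \<le> ereal A}"
  have Kc: "compactin (skorohod_topology T) K"
  proof -
    have "\<forall>c::real. \<forall>V. c \<ge> 0 \<longrightarrow> compact V \<longrightarrow>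
        compactin (skorohod_topology T) {\<phi>\<in>Dsp T. \<phi> 0 \<in> V \<and> I T \<phi> \<le> ereal c}"
      using H unfolding good_rate_function_def by blast
    then have "compactin (skorohod_topology T) {\<phi>\<in>Dsp T. \<phi> 0 \<in> {q} \<and> I T \<phi> \<le> ereal A}"
      using assms(5) compact_sing[of q] by (meson less_imp_le)
    then show ?thesis unfolding K_def .
  qed
  have cover: "K \<subseteq> \<Union>(range (\<lambda>k::nat. bset T (real k)))"
  proof
    fix \<phi> assume "\<phi> \<in> K"
    then have \<phi>: "\<phi> \<in> Dsp T" unfolding K_def by blast
    obtain B where B: "\<forall>t\<in>{0..T}. norm (\<phi> t) \<le> B" using Dsp_bounded[OF \<phi>] by blast
    obtain k :: nat where "B < real k" using reals_Archimedean2 by blast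
    then have "\<phi> \<in> bset T (real k)" unfolding bset_def using \<phi> B by blast
    then show "\<phi> \<in> \<Union>(range (\<lambda>k::nat. bset T (real k)))" by blast
  qed
  have "\<forall>U\<in>range (\<lambda>k::nat. bset T (real k) :: (real \<Rightarrow> real^'d) set). openin (skorohod_topology T) U"
    using sk_open_bset by (auto simp: openin_skorohod)
  then obtain \<F> where \<F>: "finite \<F>" "\<F> \<subseteq> range (\<lambda>k::nat. bset T (real k))" "K \<subseteq> \<Union>\<F>"
    using Kc cover unfolding compactin_def by meson
  then obtain Nn where Nn: "finite Nn" "\<F> = (\<lambda>k::nat. bset T (real k)) ` Nn"
    by (meson finite_subset_image subset_UNIV)
  define R where "R = real (Max (insert 0 Nn)) + 1"
  have Rpos: "R > 0" unfolding R_def by simp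
  have KR: "K \<subseteq> bset T R"
  proof
    fix \<phi> assume "\<phi> \<in> K"
    then obtain k where k: "k \<in> Nn" "\<phi> \<in> bset T (real k)" using \<F> Nn by blast
    have "k \<le> Max (insert 0 Nn)" using k(1) Nn(1) by simp
    then have "real k < R" unfolding R_def by linarith
    then show "\<phi> \<in> bset T R" using k(2) unfolding bset_def by force
  qed
  define F :: "(real \<Rightarrow> real^'d) set" where "F = Dsp T - bset T R"
  have bsub: "(bset T R :: (real \<Rightarrow> real^'d) set) \<subseteq> Dsp T" unfolding bset_def by blast
  have Fclosed: "closedin (skorohod_topology T) F"
  proof -
    have "topspace (skorohod_topology T) - F = (bset T R :: (real \<Rightarrow> real^'d) set)"
      unfolding topspace_skorohod F_def using bsub by blast
    then show ?thesis unfolding closedin_def topspace_skorohod F_def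
      using sk_open_bset[of T R] by (simp add: openin_skorohod topspace_skorohod)
  qed
  have Finf: "ereal A \<le> (INF \<phi>\<in>{\<phi>\<in>F. \<phi> 0 = q}. I T \<phi>)"
  proof (rule INF_greatest)
    fix \<phi> assume "\<phi> \<in> {\<phi>\<in>F. \<phi> 0 = q}"
    then have "\<phi> \<in> Dsp T" "\<phi> \<notin> bset T R" "\<phi> 0 = q" unfolding F_def by auto
    then show "ereal A \<le> I T \<phi>" using KR unfolding K_def by force
  qed
  define G where "G = (\<lambda>\<delta> \<epsilon>. SUP z'\<in>{z'\<in>E. norm (\<epsilon> *\<^sub>R z' - q) < \<delta>}.
            ereal \<epsilon> * elog (measure (P z') {\<omega>\<in>space (P z'). rescaled_path Z \<epsilon> T \<omega> \<in> F}))"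
  define h where "h = (\<lambda>\<delta>. Limsup (at_right (0::real)) (G \<delta>))"
  define g where "g = (\<lambda>\<delta>. limsup (\<lambda>n::nat.
            SUP z\<in>{z\<in>E. norm (real n *\<^sub>R q - z) < \<delta> * real n}.
              ereal (1 / real n) *
              elog (measure (P z) {\<omega>\<in>space (P z). exit_time Z (real n * R) \<omega> \<le> ereal (T * real n)})))"
  have hb: "Lim (at_right 0) h \<le> - (INF \<phi>\<in>{\<phi>\<in>F. \<phi> 0 = q}. I T \<phi>)"
    using H Fclosed unfolding h_def G_def by blast
  have hmono: "h a \<le> h b" if "0 < a" "a \<le> b" for a b
    unfolding h_def G_def using that
    by (intro Limsup_mono always_eventually allI SUP_subset_mono) auto
  have gmono: "g a \<le> g b" if "0 < a" "a \<le> b" for a b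
  proof -
    have "a * real n \<le> b * real n" for n :: nat using that by (intro mult_right_mono) auto
    then show ?thesis unfolding g_def
      by (intro Limsup_mono always_eventually allI SUP_subset_mono) (auto intro: less_le_trans)
  qed
  have spaceB: "space (borel_of_top (skorohod_topology T :: (real \<Rightarrow> real^'d) topology)) = Dsp T"
    unfolding borel_of_top_def by (simp add: space_measure_of_conv topspace_skorohod)
  have Fsets: "F \<in> sets (borel_of_top (skorohod_topology T))"
  proof -
    have sub: "{U. openin (skorohod_topology T :: (real \<Rightarrow> real^'d) topology) U} \<subseteq> Pow (topspace (skorohod_topology T))"
      by (auto dest: openin_subset)
    have "openin (skorohod_topology T) (bset T R :: (real \<Rightarrow> real^'d) set)"
      using sk_open_bset by (simp add: openin_skorohod)
    then have "topspace (skorohod_topology T) - (bset T R :: (real \<Rightarrow> real^'d) set)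
        \<in> sigma_sets (topspace (skorohod_topology T)) {U. openin (skorohod_topology T) U}"
      by (intro sigma_sets.Compl sigma_sets.Basic) simp
    then show ?thesis unfolding borel_of_top_def F_def using sets_measure_of[OF sub]
      by (simp add: topspace_skorohod)
  qed
  have gh: "g \<delta> \<le> h \<delta>" if "\<delta> > 0" for \<delta>
  proof -
    have "g \<delta> \<le> limsup (\<lambda>n::nat. G \<delta> (1 / real n))"
      unfolding g_def
    proof (intro Limsup_mono eventually_sequentiallyI[of 1])
      fix n :: nat assume "1 \<le> n"
      then have npos: "real n > 0" by simp
      have seteq: "{z\<in>E. norm (real n *\<^sub>R q - z) < \<delta> * real n} = {z'\<in>E. norm ((1 / real n) *\<^sub>R z' - q) < \<delta>}"
      proof -
        have "norm ((1 / real n) *\<^sub>R z - q) = norm (real n *\<^sub>R q - z) / real n" for z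
        proof -
          have "(1 / real n) *\<^sub>R z - q = (1 / real n) *\<^sub>R (z - real n *\<^sub>R q)"
            using npos by (simp add: algebra_simps)
          then show ?thesis using npos by (simp add: norm_minus_commute)
        qed
        then show ?thesis using npos by (auto simp: divide_less_eq)
      qed
      have pt: "ereal (1 / real n) *
              elog (measure (P z) {\<omega>\<in>space (P z). exit_time Z (real n * R) \<omega> \<le> ereal (T * real n)})
            \<le> ereal (1 / real n) * elog (measure (P z) {\<omega>\<in>space (P z). rescaled_path Z (1 / real n) T \<omega> \<in> F})"
        if zE: "z \<in> E" for z
      proof -
        have cp: "prob_space (P z)" "\<forall>\<omega>\<in>space (P z). \<forall>t\<ge>0. continuous (at_right t) (\<lambda>s. Z s \<omega>)"
          "(\<lambda>\<omega>. rescaled_path Z (1 / real n) T \<omega>) \<in> measurable (P z) (borel_of_top (skorohod_topology T))"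
          using assms(2) zE assms(4) npos unfolding cadlag_process_on_def by auto
        have fm: "finite_measure (P z)" using cp(1) by (rule prob_space.axioms(1))
        have Fv: "{\<omega>\<in>space (P z). rescaled_path Z (1 / real n) T \<omega> \<in> F}
            = (\<lambda>\<omega>. rescaled_path Z (1 / real n) T \<omega>) -` F \<inter> space (P z)" by blast
        have Fvs: "{\<omega>\<in>space (P z). rescaled_path Z (1 / real n) T \<omega> \<in> F} \<in> sets (P z)"
          unfolding Fv by (rule measurable_sets[OF cp(3) Fsets])
        have sub: "{\<omega>\<in>space (P z). exit_time Z (real n * R) \<omega> \<le> ereal (T * real n)}
            \<subseteq> {\<omega>\<in>space (P z). rescaled_path Z (1 / real n) T \<omega> \<in> F}"
        proof safe
          fix \<omega> assume \<omega>: "\<omega> \<in> space (P z)" "exit_time Z (real n * R) \<omega> \<le> ereal (T * real n)"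
          obtain t0 where t0: "0 \<le> t0" "t0 \<le> T * real n" "norm (Z t0 \<omega>) \<ge> real n * R"
            using exit_attained[OF _ \<omega>(2)] cp(2) \<omega>(1) by blast
          have inD: "rescaled_path Z (1 / real n) T \<omega> \<in> Dsp T"
            using measurable_space[OF cp(3) \<omega>(1)] spaceB by simp
          have notb: "rescaled_path Z (1 / real n) T \<omega> \<notin> bset T R"
          proof
            assume "rescaled_path Z (1 / real n) T \<omega> \<in> bset T R"
            then obtain m where m: "m < R" "\<forall>t\<in>{0..T}. norm (rescaled_path Z (1 / real n) T \<omega> t) \<le> m"
              unfolding bset_def by blast
            define t where "t = t0 / real n"
            have t: "0 \<le> t" "t \<le> T" using t0 npos unfolding t_def by (auto simp: divide_le_eq)
            have "rescaled_path Z (1 / real n) T \<omega> t = (1 / real n) *\<^sub>R Z t0 \<omega>"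
              unfolding rescaled_path_def clamp_def t_def using t npos t_def by simp
            then have "norm (rescaled_path Z (1 / real n) T \<omega> t) = norm (Z t0 \<omega>) / real n"
              using npos by simp
            also have "\<dots> \<ge> R" using t0(3) npos by (simp add: le_divide_eq mult.commute)
            finally show False using m t by force
          qed
          show "rescaled_path Z (1 / real n) T \<omega> \<in> F" using inD notb unfolding F_def by blast
        qed
        have "measure (P z) {\<omega>\<in>space (P z). exit_time Z (real n * R) \<omega> \<le> ereal (T * real n)}
            \<le> measure (P z) {\<omega>\<in>space (P z). rescaled_path Z (1 / real n) T \<omega> \<in> F}"
          by (rule finite_measure.finite_measure_mono[OF fm sub Fvs])
        then show ?thesis by (intro ereal_mult_left_mono elog_mono) (use npos in auto)
      qed
      show "(SUP z\<in>{z\<in>E. norm (real n *\<^sub>R q - z) < \<delta> * real n}.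
              ereal (1 / real n) *
              elog (measure (P z) {\<omega>\<in>space (P z). exit_time Z (real n * R) \<omega> \<le> ereal (T * real n)}))
            \<le> G \<delta> (1 / real n)"
        unfolding G_def seteq by (rule SUP_mono) (use pt in blast)
    qed
    also have "\<dots> \<le> h \<delta>" unfolding h_def by (rule limsup_seq_le_Limsup_at_right)
    finally show ?thesis .
  qed
  have gl: "Lim (at_right 0) g = (INF d\<in>{0<..}. g d)"
    by (rule tendsto_Lim) (auto intro: mono_tendsto_at_right0 gmono)
  have hl: "Lim (at_right 0) h = (INF d\<in>{0<..}. h d)"
    by (rule tendsto_Lim) (auto intro: mono_tendsto_at_right0 hmono)
  have "Lim (at_right 0) g \<le> Lim (at_right 0) h"
    unfolding gl hl by (rule INF_mono) (use gh in auto)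
  also have "\<dots> \<le> - (INF \<phi>\<in>{\<phi>\<in>F. \<phi> 0 = q}. I T \<phi>)" by (rule hb)
  also have "\<dots> \<le> ereal (- A)" using Finf by (subst ereal_uminus_le_reorder) simp
  finally have "Lim (at_right 0) g \<le> ereal (- A)" .
  then show ?thesis using Rpos unfolding g_def by blast
qed

end
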